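(* Let $I$ be a nonempty finite set. The antipode $s_I$ of the Hopf monoid $\mathbb I(\mathbf{GP}^+)$ satisfies, for every extended generalized permutahedron $P\subseteq\mathbb R^I$, $$s_I(\mathbb 1_P)=(-1)^{|I|-\dim P}\,\mathbb 1_{P^\circ},$$ where $P^\circ$ is the relative interior of $P$ (and $\mathbb 1_{P^\circ}$ lies in $\mathbb I(\mathbf{GP}^+)[I]$).
   Context: $\mathbf{GP}^+$ is the Hopf monoid of extended generalized permutahedra: $\mathbf{GP}^+[I]$ has basis the polyhedra $P=\{x\in\mathbb R^I:\sum_{i\in I}x_i=z(I),\ \sum_{i\in A}x_i\le z(A)\ \forall A\subseteq I\}$ with $z:2^I\to\mathbb R\cup\{\infty\}$ submodular on its finite values and $z(I)$ finite; product $P\cdot Q=P\times Q$; coproduct $\Delta_{S,T}(P)=P|_S\otimes P/_S$ where $P|_S\times P/_S$ is the face of $P$ maximizing $\sum_{i\in S}x_i$ if this functional is bounded above on $P$, and $0$ otherwise. $\mathbb I(\mathbf{GP}^+)[I]$ is the span of indicator functions $\mathbb 1_P$ of such $P$, which is the quotient Hopf monoid $\mathbf{GP}^+/\ker(P\mapsto\mathbb 1_P)$ with the induced product and coproduct. The antipode of a connected Hopf monoid is given for $I\ne\emptyset$ by $s_I(x)=\sum_{k\ge1}\sum_{(S_1,\dots,S_k)}(-1)^k\,m_{S_1,\dots,S_k}\circ\Delta_{S_1,\dots,S_k}(x)$, summing over ordered set partitions of $I$ into nonempty blocks. *)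

theory Defs
  imports "HOL-Analysis.Analysis"
begin

text \<open>The ground set I is the universe of a finite type 'n; R^I is real^'n.\<close>

text \<open>z : 2^I -> R \<union> {\<infinity>}, submodular (in extended arithmetic, i.e. the
  inequality is required whenever z A and z B are finite), with z(I) finite.\<close>
definition ext_submodular :: "('n::finite set \<Rightarrow> ereal) \<Rightarrow> bool" where
  "ext_submodular z \<longleftrightarrow>
     (\<forall>A. z A \<noteq> -\<infinity>) \<and> z UNIV \<noteq> \<infinity> \<and>
     (\<forall>A B. z (A \<union> B) + z (A \<inter> B) \<le> z A + z B)"

definition GP_of :: "('n::finite set \<Rightarrow> ereal) \<Rightarrow> (real^'n) set" where
  "GP_of z = {x. ereal (\<Sum>i\<in>UNIV. x $ i) = z UNIV \<and>
                 (\<forall>A. ereal (\<Sum>i\<in>A. x $ i) \<le> z A)}"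

definition is_ext_GP :: "(real^'n::finite) set \<Rightarrow> bool" where
  "is_ext_GP P \<longleftrightarrow> (\<exists>z. ext_submodular z \<and> P = GP_of z)"

text \<open>Coproduct Delta_{S,T}: the face P|_S x P/_S of P maximizing sum_{i in S} x_i
  (as a subset of R^I = R^S x R^T), or 0 (represented by the empty set, whose
  indicator is the zero function) if that functional is unbounded above.\<close>
definition max_face :: "'n::finite set \<Rightarrow> (real^'n) set \<Rightarrow> (real^'n) set" where
  "max_face S F =
     (if F \<noteq> {} \<and> bdd_above ((\<lambda>x. \<Sum>i\<in>S. x $ i) ` F)
      then {x\<in>F. \<forall>y\<in>F. (\<Sum>i\<in>S. y $ i) \<le> (\<Sum>i\<in>S. x $ i)}
      else {})"

text \<open>m_{S_1,...,S_k} o Delta_{S_1,...,S_k}(P), as a subset of R^I (empty = 0).\<close>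
fun lex_face :: "'n::finite set list \<Rightarrow> (real^'n) set \<Rightarrow> (real^'n) set" where
  "lex_face [] F = F"
| "lex_face (S # Ss) F = lex_face Ss (max_face S F)"

definition ordered_set_partitions :: "'a set \<Rightarrow> 'a set list set" where
  "ordered_set_partitions I =
     {Ss. (\<forall>S\<in>set Ss. S \<noteq> {}) \<and>
          (\<forall>i<length Ss. \<forall>j<length Ss. i \<noteq> j \<longrightarrow> Ss ! i \<inter> Ss ! j = {}) \<and>
          \<Union>(set Ss) = I}"

text \<open>Antipode of I(GP+) on 1_P via the Takeuchi formula, as a function on R^I:
  s_I(1_P) = sum over ordered set partitions (-1)^k 1_{m o Delta_{S_1..S_k}(P)}.\<close>
definition GP_antipode :: "(real^'n::finite) set \<Rightarrow> (real^'n) \<Rightarrow> int" where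
  "GP_antipode P = (\<lambda>x. \<Sum>Ss\<in>ordered_set_partitions (UNIV::'n set).
       (-1) ^ length Ss * indicator (lex_face Ss P) x)"

end

theory Submission
  imports Defs
begin


definition ind :: "'n::finite set \<Rightarrow> real^'n" where
  "ind V = (\<chi> i. if i \<in> V then 1 else 0)"

locale ringfam =
  fixes M :: "'n::finite set set"
  assumes empty_in: "{} \<in> M"
    and un: "A \<in> M \<Longrightarrow> B \<in> M \<Longrightarrow> A \<union> B \<in> M"
    and int: "A \<in> M \<Longrightarrow> B \<in> M \<Longrightarrow> A \<inter> B \<in> M"
begin

definition atom where "atom A \<longleftrightarrow> A \<in> M \<and> A \<noteq> {} \<and> (\<forall>B\<in>M. B \<subseteq> A \<longrightarrow> B = {} \<or> B = A)"

lemma atom_exists: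
  assumes "W \<in> M" "W \<noteq> {}" shows "\<exists>A. atom A \<and> A \<subseteq> W"
proof -
  let ?C = "{V\<in>M. V \<noteq> {} \<and> V \<subseteq> W}"
  have fin: "finite ?C" by (rule finite)
  have ne: "?C \<noteq> {}" using assms by blast
  from finite_has_minimal[OF fin ne] obtain m where m: "m \<in> ?C" and mm: "\<forall>b\<in>?C. b \<le> m \<longrightarrow> m = b"
    by blast
  have "atom m" unfolding atom_def
  proof (intro conjI ballI impI)
    show "m \<in> M" "m \<noteq> {}" using m by simp_all
    fix B assume B: "B \<in> M" "B \<subseteq> m"
    show "B = {} \<or> B = m"
    proof (cases "B = {}")
      case False
      then have "B \<in> ?C" using B m by blast
      then have "m = B" using mm B by blast
      then show ?thesis by simp
    qed simp
  qed
  then show ?thesis using m by blast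
qed

definition Bool where "Bool W \<longleftrightarrow> (\<forall>V\<in>M. V \<subseteq> W \<longrightarrow> W - V \<in> M)"
definition d where "d W = dim (ind ` {V\<in>M. V \<subseteq> W})"

lemma atom_split:
  assumes "atom A" "V \<in> M" shows "V \<inter> A = {} \<or> A \<subseteq> V"
proof -
  have "V \<inter> A \<in> M" using assms int unfolding atom_def by blast
  moreover have "V \<inter> A \<subseteq> A" by blast
  ultimately have "V \<inter> A = {} \<or> V \<inter> A = A" using assms(1) unfolding atom_def by blast
  then show ?thesis by blast
qed

lemma key:
  fixes F :: "'n set \<Rightarrow> int"
  assumes F0: "\<And>V. V \<notin> M \<Longrightarrow> F V = 0"
    and FS: "\<And>W. W \<in> M \<Longrightarrow> W \<noteq> {} \<Longrightarrow> (\<Sum>V\<in>Pow W. F V) = 0"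
    and A: "atom A"
  shows "V \<inter> A = {} \<Longrightarrow> F (V \<union> A) = - F V"
  using finite[of V]
proof (induction V rule: finite_psubset_induct)
  case (psubset V)
  show ?case
  proof (cases "V \<union> A \<in> M")
    case False
    then have "V \<notin> M" using A un unfolding atom_def by blast
    then show ?thesis using False F0 by simp
  next
    case True
    have Ane: "A \<noteq> {}" using A unfolding atom_def by auto
    let ?X = "Pow V \<union> (\<lambda>U. U \<union> A) ` Pow V"
    have e1: "(\<Sum>U\<in>Pow (V \<union> A). F U) = (\<Sum>U\<in>?X. F U)"
    proof (rule sum.mono_neutral_right)
      show "?X \<subseteq> Pow (V \<union> A)" by auto
      show "\<forall>i\<in>Pow (V \<union> A) - ?X. F i = 0"
      proof
        fix U assume U: "U \<in> Pow (V \<union> A) - ?X"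
        show "F U = 0"
        proof (rule F0, rule notI)
          assume "U \<in> M"
          then have "U \<inter> A = {} \<or> A \<subseteq> U" using atom_split A by blast
          moreover
          have "U \<inter> A = {} \<Longrightarrow> U \<in> Pow V" using U by auto
          moreover
          have "A \<subseteq> U \<Longrightarrow> U \<in> (\<lambda>U. U \<union> A) ` Pow V"
            using U by (intro image_eqI[of _ _ "U - A"]) auto
          ultimately show False using U by blast
        qed
      qed
    qed simp
    have e2: "(\<Sum>U\<in>?X. F U) = (\<Sum>U\<in>Pow V. F U) + (\<Sum>U\<in>(\<lambda>U. U \<union> A) ` Pow V. F U)"
    proof (rule sum.union_disjoint)
      show "Pow V \<inter> (\<lambda>U. U \<union> A) ` Pow V = {}"
      proof (rule equals0I)
        fix U assume "U \<in> Pow V \<inter> (\<lambda>U. U \<union> A) ` Pow V"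
        then have "U \<subseteq> V" "A \<subseteq> U" by auto
        then show False using psubset.prems Ane by blast
      qed
    qed (rule finite)+
    have e3: "(\<Sum>U\<in>(\<lambda>U. U \<union> A) ` Pow V. F U) = (\<Sum>U\<in>Pow V. F (U \<union> A))"
    proof -
      have "inj_on (\<lambda>U. U \<union> A) (Pow V)"
        unfolding inj_on_def using psubset.prems by blast
      then show ?thesis by (simp add: sum.reindex)
    qed
    have e4: "(\<Sum>U\<in>Pow V. F U + F (U \<union> A)) = F V + F (V \<union> A) + (\<Sum>U\<in>Pow V - {V}. F U + F (U \<union> A))"
      by (subst sum.remove[of _ V]) auto
    have e5: "(\<Sum>U\<in>Pow V - {V}. F U + F (U \<union> A)) = 0"
    proof (rule sum.neutral, rule ballI)
      fix U assume "U \<in> Pow V - {V}"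
      then have "U \<subset> V" "U \<inter> A = {}" using psubset.prems by auto
      then show "F U + F (U \<union> A) = 0" using psubset.IH by simp
    qed
    have "(\<Sum>U\<in>Pow V. F U + F (U \<union> A)) = 0"
      using FS[OF True] Ane e1 e2 e3 by (simp add: sum.distrib)
    then have "F V + F (V \<union> A) = 0" using e4 e5 by simp
    then show ?thesis by simp
  qed
qed

lemma ind_notin_span:
  fixes A :: "'n set"
  assumes "A \<noteq> {}" "\<forall>V\<in>Y. V \<inter> A = {}"
  shows "ind A \<notin> span (ind ` Y)"
proof
  assume a: "ind A \<in> span (ind ` Y)"
  let ?S = "{x::real^'n. \<forall>i\<in>A. x $ i = 0}"
  have "subspace ?S" unfolding subspace_def by auto
  moreover have "ind ` Y \<subseteq> ?S" using assms(2) by (force simp: ind_def)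
  ultimately have "span (ind ` Y) \<subseteq> ?S" by (simp add: span_minimal)
  with a have "ind A \<in> ?S" by blast
  then show False using assms(1) by (auto simp: ind_def)
qed

lemma ind_union: "V \<inter> A = {} \<Longrightarrow> ind (V \<union> A) = ind V + ind A"
  by (auto simp: ind_def vec_eq_iff)

lemma d_step:
  assumes A: "atom A" and AW: "A \<subseteq> W" and WA: "W - A \<in> M"
  shows "d W = d (W - A) + 1"
proof -
  let ?X = "ind ` {V\<in>M. V \<subseteq> W}" and ?Y = "ind ` {V\<in>M. V \<subseteq> W - A}"
  have "span ?X = span (insert (ind A) ?Y)"
  unfolding span_eq
  proof (intro conjI)
    show "?X \<subseteq> span (insert (ind A) ?Y)"
    proof
      fix x assume "x \<in> ?X"
      then obtain V where V: "V \<in> M" "V \<subseteq> W" "x = ind V" by auto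
      have V': "V \<inter> (W - A) \<in> M" using int V WA by auto
      have "V \<inter> A = {} \<or> A \<subseteq> V" using atom_split A V by blast
      then show "x \<in> span (insert (ind A) ?Y)"
      proof
        assume "V \<inter> A = {}"
        then have "V = V \<inter> (W - A)" using V by auto
        then have "x \<in> ?Y" using V V' by auto
        then show ?thesis by (intro span_base) auto
      next
        assume AV: "A \<subseteq> V"
        then have "V = (V \<inter> (W - A)) \<union> A" using V by auto
        then have "x = ind (V \<inter> (W - A)) + ind A" using V ind_union[of "V \<inter> (W - A)" A] by auto
        moreover have "ind (V \<inter> (W - A)) \<in> span (insert (ind A) ?Y)" using V'
          by (intro span_base) auto
        moreover have "ind A \<in> span (insert (ind A) ?Y)" by (intro span_base) auto
        ultimately show ?thesis by (simp add: span_add)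
      qed
    qed
    show "insert (ind A) ?Y \<subseteq> span ?X"
    proof (rule subset_trans[OF _ span_superset], rule subsetI)
      fix x assume "x \<in> insert (ind A) ?Y"
      then show "x \<in> ?X" using A AW unfolding atom_def by blast
    qed
  qed
  then have "dim (span ?X) = dim (span (insert (ind A) ?Y))" by simp
  then have 1: "dim ?X = dim (insert (ind A) ?Y)" by (simp only: dim_span)
  have 2: "ind A \<notin> span ?Y"
    using ind_notin_span[of A "{V\<in>M. V \<subseteq> W - A}"] A unfolding atom_def by blast
  have "dim (insert (ind A) ?Y) = dim ?Y + 1"
    using dim_insert[of "ind A" ?Y] 2 by simp
  then show ?thesis unfolding d_def using 1 by simp
qed

lemma Bool_step:
  assumes A: "atom A" and AW: "A \<subseteq> W" and WA: "W - A \<in> M"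
  shows "Bool W \<longleftrightarrow> Bool (W - A)"
proof
  assume B: "Bool W"
  show "Bool (W - A)" unfolding Bool_def
  proof (intro ballI impI)
    fix V assume "V \<in> M" "V \<subseteq> W - A"
    then have "W - V \<in> M" using B AW unfolding Bool_def by auto
    then have "(W - V) \<inter> (W - A) \<in> M" using int WA by auto
    moreover have "(W - V) \<inter> (W - A) = W - A - V" by auto
    ultimately show "W - A - V \<in> M" by simp
  qed
next
  assume B: "Bool (W - A)"
  show "Bool W" unfolding Bool_def
  proof (intro ballI impI)
    fix V assume V: "V \<in> M" "V \<subseteq> W"
    have V': "V \<inter> (W - A) \<in> M" using int V WA by auto
    then have C: "W - A - V \<inter> (W - A) \<in> M" using B unfolding Bool_def by auto
    have "V \<inter> A = {} \<or> A \<subseteq> V" using atom_split A V by blast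
    then show "W - V \<in> M"
    proof
      assume "V \<inter> A = {}"
      then have "W - V = (W - A - V \<inter> (W - A)) \<union> A" using V AW by auto
      then show ?thesis using C un A unfolding atom_def by auto
    next
      assume "A \<subseteq> V"
      then have "W - V = W - A - V \<inter> (W - A)" using V AW by auto
      then show ?thesis using C by simp
    qed
  qed
qed

lemma closed_form:
  fixes F :: "'n set \<Rightarrow> int"
  assumes F0: "\<And>V. V \<notin> M \<Longrightarrow> F V = 0"
    and Fe: "F {} = 1"
    and FS: "\<And>W. W \<in> M \<Longrightarrow> W \<noteq> {} \<Longrightarrow> (\<Sum>V\<in>Pow W. F V) = 0"
  shows "W \<in> M \<Longrightarrow> F W = (if Bool W then (-1) ^ d W else 0)"
  using finite[of W]
proof (induction W rule: finite_psubset_induct)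
  case (psubset W)
  show ?case
  proof (cases "W = {}")
    case True
    have "{V\<in>M. V \<subseteq> {}} = {{}}" using empty_in by auto
    then have "d {} = 0" unfolding d_def by (simp add: ind_def vec_eq_iff zero_vec_def[symmetric])
    moreover have "Bool {}" unfolding Bool_def using empty_in by auto
    ultimately show ?thesis using True Fe by simp
  next
    case False
    obtain A where A: "atom A" "A \<subseteq> W" using atom_exists[OF psubset.prems False] by blast
    have "F ((W - A) \<union> A) = - F (W - A)"
      by (rule key[OF F0 FS A(1)]) auto
    moreover have "(W - A) \<union> A = W" using A by auto
    ultimately have FW: "F W = - F (W - A)" by simp
    show ?thesis
    proof (cases "W - A \<in> M")
      case False
      then have "\<not> Bool W" using A unfolding Bool_def atom_def by auto
      then show ?thesis using FW F0[OF False] by simp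
    next
      case True
      have "W - A \<subset> W" using A unfolding atom_def by auto
      then have "F (W - A) = (if Bool (W - A) then (-1) ^ d (W - A) else 0)"
        using psubset.IH True by blast
      then show ?thesis using FW Bool_step[OF A True] d_step[OF A True] by simp
    qed
  qed
qed

end


lemma osp_Nil_iff: "[] \<in> ordered_set_partitions W \<longleftrightarrow> W = {}"
  unfolding ordered_set_partitions_def by auto

lemma osp_empty: "ordered_set_partitions {} = {[]}"
proof -
  have "Ss \<in> ordered_set_partitions {} \<longleftrightarrow> Ss = []" for Ss :: "'a set list"
  proof
    assume "Ss \<in> ordered_set_partitions {}"
    then have "\<forall>S\<in>set Ss. S \<noteq> {}" "\<Union>(set Ss) = {}" unfolding ordered_set_partitions_def by auto
    then show "Ss = []" by (cases Ss) auto
  qed (simp add: osp_Nil_iff)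
  then show ?thesis by blast
qed

lemma osp_Cons_iff:
  "S # Ss \<in> ordered_set_partitions W \<longleftrightarrow>
     S \<noteq> {} \<and> S \<subseteq> W \<and> Ss \<in> ordered_set_partitions (W - S)"
proof
  assume a: "S # Ss \<in> ordered_set_partitions W"
  then have ne: "\<forall>T\<in>set (S#Ss). T \<noteq> {}"
    and dj: "\<forall>i<length (S#Ss). \<forall>j<length (S#Ss). i \<noteq> j \<longrightarrow> (S#Ss) ! i \<inter> (S#Ss) ! j = {}"
    and un: "\<Union>(set (S#Ss)) = W"
    unfolding ordered_set_partitions_def by auto
  have djS: "S \<inter> \<Union>(set Ss) = {}"
  proof -
    have "S \<inter> T = {}" if T: "T \<in> set Ss" for T
    proof -
      obtain k where k: "k < length Ss" "Ss ! k = T" using T by (meson in_set_conv_nth)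
      show ?thesis using dj[rule_format, of 0 "Suc k"] k by simp
    qed
    then show ?thesis by blast
  qed
  have dj': "\<forall>i<length Ss. \<forall>j<length Ss. i \<noteq> j \<longrightarrow> Ss ! i \<inter> Ss ! j = {}"
  proof (intro allI impI)
    fix i j assume "i < length Ss" "j < length Ss" "i \<noteq> j"
    then show "Ss ! i \<inter> Ss ! j = {}" using dj[rule_format, of "Suc i" "Suc j"] by simp
  qed
  have "\<Union>(set Ss) = W - S" using un djS by auto
  then show "S \<noteq> {} \<and> S \<subseteq> W \<and> Ss \<in> ordered_set_partitions (W - S)"
    using ne dj' un unfolding ordered_set_partitions_def by auto
next
  assume a: "S \<noteq> {} \<and> S \<subseteq> W \<and> Ss \<in> ordered_set_partitions (W - S)"
  then have ne: "\<forall>T\<in>set Ss. T \<noteq> {}"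
    and dj: "\<forall>i<length Ss. \<forall>j<length Ss. i \<noteq> j \<longrightarrow> Ss ! i \<inter> Ss ! j = {}"
    and un: "\<Union>(set Ss) = W - S"
    unfolding ordered_set_partitions_def by auto
  have dj2: "\<forall>i<length (S#Ss). \<forall>j<length (S#Ss). i \<noteq> j \<longrightarrow> (S#Ss) ! i \<inter> (S#Ss) ! j = {}"
  proof (intro allI impI)
    fix i j assume ij: "i < length (S#Ss)" "j < length (S#Ss)" "i \<noteq> j"
    show "(S#Ss) ! i \<inter> (S#Ss) ! j = {}"
    proof (cases i)
      case 0
      then obtain j' where "j = Suc j'" "j' < length Ss" using ij by (cases j) auto
      then have "(S#Ss) ! j \<subseteq> W - S" using un nth_mem by fastforce
      then show ?thesis using 0 by auto
    next
      case (Suc i')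
      show ?thesis
      proof (cases j)
        case 0
        have "(S#Ss) ! i \<subseteq> W - S" using un nth_mem Suc ij by fastforce
        then show ?thesis using 0 by auto
      next
        case (Suc j')
        then show ?thesis using dj \<open>i = Suc i'\<close> ij by auto
      qed
    qed
  qed
  show "S # Ss \<in> ordered_set_partitions W"
    unfolding ordered_set_partitions_def using a ne dj2 un by auto
qed

lemma osp_decomp:
  assumes "W \<noteq> {}"
  shows "ordered_set_partitions W =
    (\<lambda>p. fst p # snd p) ` (SIGMA S:{S. S \<subseteq> W \<and> S \<noteq> {}}. ordered_set_partitions (W - S))"
proof (rule set_eqI)
  fix Ss show "Ss \<in> ordered_set_partitions W \<longleftrightarrow>
    Ss \<in> (\<lambda>p. fst p # snd p) ` (SIGMA S:{S. S \<subseteq> W \<and> S \<noteq> {}}. ordered_set_partitions (W - S))"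
  proof (cases Ss)
    case Nil
    have "[] \<notin> ordered_set_partitions W" using assms by (simp add: osp_Nil_iff)
    moreover have "[] \<notin> (\<lambda>p. fst p # snd p) ` (SIGMA S:{S. S \<subseteq> W \<and> S \<noteq> {}}. ordered_set_partitions (W - S))"
    proof
      assume "[] \<in> (\<lambda>p. fst p # snd p) ` (SIGMA S:{S. S \<subseteq> W \<and> S \<noteq> {}}. ordered_set_partitions (W - S))"
      then show False by (elim imageE) simp
    qed
    ultimately show ?thesis using Nil by simp
  next
    case (Cons S Ts)
    let ?A = "SIGMA S:{S. S \<subseteq> W \<and> S \<noteq> {}}. ordered_set_partitions (W - S)"
    have "S # Ts \<in> (\<lambda>p. fst p # snd p) ` ?A \<longleftrightarrow> (S, Ts) \<in> ?A"
    proof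
      assume "S # Ts \<in> (\<lambda>p. fst p # snd p) ` ?A"
      then obtain p where p: "p \<in> ?A" "S # Ts = fst p # snd p" by blast
      then have "p = (S, Ts)" by (simp add: prod_eq_iff)
      with p show "(S, Ts) \<in> ?A" by simp
    next
      assume "(S, Ts) \<in> ?A"
      then show "S # Ts \<in> (\<lambda>p. fst p # snd p) ` ?A" by (rule image_eqI[rotated]) simp
    qed
    moreover have "(S, Ts) \<in> ?A \<longleftrightarrow> S # Ts \<in> ordered_set_partitions W"
      using osp_Cons_iff[of S Ts W] by auto
    ultimately show ?thesis using Cons by simp
  qed
qed

lemma finite_osp: "finite (ordered_set_partitions (W::'n::finite set))"
  using finite[of W]
proof (induction W rule: finite_psubset_induct)
  case (psubset W)
  show ?case
  proof (cases "W = {}")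
    case True then show ?thesis by (simp add: osp_empty)
  next
    case False
    have "finite (SIGMA S:{S. S \<subseteq> W \<and> S \<noteq> {}}. ordered_set_partitions (W - S))"
      using psubset False by (intro finite_SigmaI) auto
    then show ?thesis using osp_decomp[OF False] by simp
  qed
qed

definition osum :: "'n::finite set set \<Rightarrow> 'n set \<Rightarrow> int" where
  "osum M W = (\<Sum>Ss\<in>ordered_set_partitions W. (-1) ^ length Ss *
      (if \<forall>j<length Ss. \<Union>(set (drop j Ss)) \<in> M then 1 else 0))"

lemma osum_empty: "osum M {} = 1"
  unfolding osum_def osp_empty by simp

lemma osum_rec:
  fixes M :: "'n::finite set set" and W :: "'n set"
  assumes "W \<noteq> {}"
  shows "osum M W = (if W \<in> M then - (\<Sum>S\<in>{S. S \<subseteq> W \<and> S \<noteq> {}}. osum M (W - S)) else 0)"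
proof -
  let ?c = "\<lambda>Ss::'n set list. (if \<forall>j<length Ss. \<Union>(set (drop j Ss)) \<in> M then 1 else 0::int)"
  let ?g = "\<lambda>Ss. (-1) ^ length Ss * ?c Ss"
  have inj: "inj_on (\<lambda>p. fst p # snd p) (SIGMA S:{S. S \<subseteq> W \<and> S \<noteq> {}}. ordered_set_partitions (W - S))"
    unfolding inj_on_def by (simp add: prod_eq_iff)
  let ?A = "SIGMA S:{S. S \<subseteq> W \<and> S \<noteq> {}}. ordered_set_partitions (W - S)"
  let ?h = "\<lambda>p::'n set \<times> 'n set list. fst p # snd p"
  have e1: "osum M W = (\<Sum>p\<in>?A. ?g (?h p))"
    unfolding osum_def osp_decomp[OF assms] by (rule sum.reindex[OF inj, unfolded comp_def])
  have e2: "(\<Sum>p\<in>?A. ?g (?h p)) = (\<Sum>p\<in>?A. case_prod (\<lambda>S Ss. ?g (S # Ss)) p)"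
    by (rule sum.cong[OF refl]) (simp add: case_prod_beta)
  have e3: "(\<Sum>S\<in>{S. S \<subseteq> W \<and> S \<noteq> {}}. \<Sum>Ss\<in>ordered_set_partitions (W - S). ?g (S # Ss))
      = (\<Sum>p\<in>?A. case_prod (\<lambda>S Ss. ?g (S # Ss)) p)"
    by (rule sum.Sigma) (simp_all add: finite_osp)
  have "osum M W = (\<Sum>S\<in>{S. S \<subseteq> W \<and> S \<noteq> {}}. \<Sum>Ss\<in>ordered_set_partitions (W - S). ?g (S # Ss))"
    using e1 e2 e3 by simp
  also have "\<dots> = (\<Sum>S\<in>{S. S \<subseteq> W \<and> S \<noteq> {}}. (if W \<in> M then - osum M (W - S) else 0))"
  proof (rule sum.cong[OF refl])
    fix S assume S: "S \<in> {S. S \<subseteq> W \<and> S \<noteq> {}}"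
    have "?g (S # Ss) = (if W \<in> M then - ?g Ss else 0)" if "Ss \<in> ordered_set_partitions (W - S)" for Ss
    proof -
      have "S # Ss \<in> ordered_set_partitions W" using that S osp_Cons_iff by blast
      then have U: "\<Union>(set (S # Ss)) = W" unfolding ordered_set_partitions_def by blast
      have "(\<forall>j<length (S#Ss). \<Union>(set (drop j (S#Ss))) \<in> M) \<longleftrightarrow>
            W \<in> M \<and> (\<forall>j<length Ss. \<Union>(set (drop j Ss)) \<in> M)"
      proof
        assume h: "\<forall>j<length (S#Ss). \<Union>(set (drop j (S#Ss))) \<in> M"
        have "W \<in> M" using h[rule_format, of 0] U by simp
        moreover have "\<forall>j<length Ss. \<Union>(set (drop j Ss)) \<in> M"
        proof (intro allI impI)
          fix j assume "j < length Ss" then show "\<Union>(set (drop j Ss)) \<in> M"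
            using h[rule_format, of "Suc j"] by simp
        qed
        ultimately show "W \<in> M \<and> (\<forall>j<length Ss. \<Union>(set (drop j Ss)) \<in> M)" by blast
      next
        assume h: "W \<in> M \<and> (\<forall>j<length Ss. \<Union>(set (drop j Ss)) \<in> M)"
        show "\<forall>j<length (S#Ss). \<Union>(set (drop j (S#Ss))) \<in> M"
        proof (intro allI impI)
          fix j assume j: "j < length (S#Ss)"
          show "\<Union>(set (drop j (S#Ss))) \<in> M"
          proof (cases j)
            case 0 then show ?thesis using h U by simp
          next
            case (Suc j') then show ?thesis using h j by simp
          qed
        qed
      qed
      then show ?thesis by auto
    qed
    then have "(\<Sum>Ss\<in>ordered_set_partitions (W - S). ?g (S # Ss)) =
               (\<Sum>Ss\<in>ordered_set_partitions (W - S). (if W \<in> M then - ?g Ss else 0))"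
      by (rule sum.cong[OF refl])
    also have "\<dots> = (if W \<in> M then - osum M (W - S) else 0)"
      unfolding osum_def by (simp add: sum_negf)
    finally show "(\<Sum>Ss\<in>ordered_set_partitions (W - S). ?g (S # Ss)) = (if W \<in> M then - osum M (W - S) else 0)" .
  qed
  also have "\<dots> = (if W \<in> M then - (\<Sum>S\<in>{S. S \<subseteq> W \<and> S \<noteq> {}}. osum M (W - S)) else 0)"
    by (simp add: sum_negf)
  finally show ?thesis .
qed

lemma osum_sumPow:
  assumes "W \<noteq> {}" "W \<in> M"
  shows "(\<Sum>V\<in>Pow W. osum M V) = 0"
proof -
  have "(\<Sum>S\<in>{S. S \<subseteq> W \<and> S \<noteq> {}}. osum M (W - S)) = (\<Sum>V\<in>Pow W - {W}. osum M V)"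
  proof (rule sum.reindex_bij_witness[of _ "\<lambda>V. W - V" "\<lambda>S. W - S"])
  qed auto
  moreover have "(\<Sum>V\<in>Pow W. osum M V) = osum M W + (\<Sum>V\<in>Pow W - {W}. osum M V)"
    by (subst sum.remove[of _ W]) auto
  ultimately show ?thesis using osum_rec[OF assms(1), of M] assms(2) by simp
qed

lemma osum_notin: "W \<noteq> {} \<Longrightarrow> W \<notin> M \<Longrightarrow> osum M W = 0"
  using osum_rec[of W M] by simp



definition ssum :: "'n::finite set \<Rightarrow> real^'n \<Rightarrow> real" where
  "ssum S x = (\<Sum>i\<in>S. x $ i)"

definition mv :: "real^'n::finite \<Rightarrow> 'n \<Rightarrow> 'n \<Rightarrow> real \<Rightarrow> real^'n" where
  "mv x i j e = x + (\<chi> k. (if k = i then e else 0) - (if k = j then e else 0))"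

lemma ssum_mv: "ssum T (mv x i j e) = ssum T x + (if i \<in> T then e else 0) - (if j \<in> T then e else 0)"
proof -
  have "ssum T (mv x i j e) = ssum T x + (\<Sum>k\<in>T. (if k = i then e else 0) - (if k = j then e else 0))"
    unfolding ssum_def mv_def by (simp add: sum.distrib)
  also have "(\<Sum>k\<in>T. (if k = i then e else 0) - (if k = j then e else 0)) =
       (\<Sum>k\<in>T. (if k = i then e else 0)) - (\<Sum>k\<in>T. (if k = j then e else 0))"
    by (rule sum_subtractf)
  also have "(\<Sum>k\<in>T. (if k = i then e else 0)) = (if i \<in> T then e else 0)"
    by (simp add: sum.delta)
  also have "(\<Sum>k\<in>T. (if k = j then e else 0)) = (if j \<in> T then e else 0)"
    by (simp add: sum.delta)
  finally show ?thesis by simp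
qed

lemma ssum_Un: "A \<inter> B = {} \<Longrightarrow> ssum (A \<union> B) x = ssum A x + ssum B x"
  unfolding ssum_def by (rule sum.union_disjoint) auto

lemma ssum_Un_Int: "ssum (A \<union> B) x + ssum (A \<inter> B) x = ssum A x + ssum B x"
  unfolding ssum_def by (rule sum.union_inter) auto

lemma ssum_empty[simp]: "ssum {} x = 0"
  unfolding ssum_def by simp

locale gp =
  fixes z :: "'n::finite set \<Rightarrow> ereal" and P :: "(real^'n) set"
  assumes sm: "ext_submodular z" and Pdef: "P = GP_of z"
begin

lemma z_nm: "z A \<noteq> -\<infinity>" using sm unfolding ext_submodular_def by blast
lemma z_U: "z UNIV \<noteq> \<infinity>" using sm unfolding ext_submodular_def by blast
lemma z_sub: "z (A \<union> B) + z (A \<inter> B) \<le> z A + z B" using sm unfolding ext_submodular_def by blast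

lemma inP: "x \<in> P \<longleftrightarrow> ereal (ssum UNIV x) = z UNIV \<and> (\<forall>A. ereal (ssum A x) \<le> z A)"
  unfolding Pdef GP_of_def ssum_def by simp

lemma inP_U: "x \<in> P \<Longrightarrow> ereal (ssum UNIV x) = z UNIV"
  using inP by blast
lemma inP_A: "x \<in> P \<Longrightarrow> ereal (ssum A x) \<le> z A"
  using inP by blast
lemma UNIV_eq: "x \<in> P \<Longrightarrow> y \<in> P \<Longrightarrow> ssum UNIV x = ssum UNIV y"
proof -
  assume "x \<in> P" "y \<in> P"
  then have "ereal (ssum UNIV x) = ereal (ssum UNIV y)" using inP_U by simp
  then show ?thesis by simp
qed

definition tight where "tight x S \<longleftrightarrow> ereal (ssum S x) = z S"

definition L where "L x S \<longleftrightarrow> (\<forall>y\<in>P. ssum S y \<le> ssum S x)"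

lemma z_real: "z A \<noteq> \<infinity> \<Longrightarrow> \<exists>r. z A = ereal r"
  using z_nm[of A] by (cases "z A") auto

lemma tight_Un_Int:
  assumes x: "x \<in> P" and A: "tight x A" and B: "tight x B"
  shows "tight x (A \<union> B) \<and> tight x (A \<inter> B)"
proof -
  have le1: "ereal (ssum (A \<union> B) x) \<le> z (A \<union> B)" and le2: "ereal (ssum (A \<inter> B) x) \<le> z (A \<inter> B)"
    using x inP by auto
  have "z A + z B = ereal (ssum A x + ssum B x)"
    using A B unfolding tight_def by (metis plus_ereal.simps(1))
  then have s: "z (A \<union> B) + z (A \<inter> B) \<le> ereal (ssum A x + ssum B x)"
    using z_sub[of A B] by simp
  have n1: "z (A \<union> B) \<noteq> \<infinity>"
  proof
    assume "z (A \<union> B) = \<infinity>"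
    then have "z (A \<union> B) + z (A \<inter> B) = \<infinity>" using z_nm[of "A \<inter> B"] by simp
    with s have "(\<infinity>::ereal) \<le> ereal (ssum A x + ssum B x)" by (simp only:)
    then show False by simp
  qed
  have n2: "z (A \<inter> B) \<noteq> \<infinity>"
  proof
    assume "z (A \<inter> B) = \<infinity>"
    then have "z (A \<union> B) + z (A \<inter> B) = \<infinity>" using z_nm[of "A \<union> B"] by simp
    with s have "(\<infinity>::ereal) \<le> ereal (ssum A x + ssum B x)" by (simp only:)
    then show False by simp
  qed
  obtain p where p: "z (A \<union> B) = ereal p" using z_real[OF n1] by blast
  obtain q where q: "z (A \<inter> B) = ereal q" using z_real[OF n2] by blast
  have "p + q \<le> ssum A x + ssum B x" using s p q by simp
  moreover have "ssum (A \<union> B) x \<le> p" "ssum (A \<inter> B) x \<le> q" using le1 le2 p q by auto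
  moreover note ssum_Un_Int[of A B x]
  ultimately have "ssum (A \<union> B) x = p" "ssum (A \<inter> B) x = q" by linarith+
  then show ?thesis unfolding tight_def using p q by simp
qed

lemma tight_UN:
  assumes x: "x \<in> P" and K: "finite K" "K \<noteq> {}" and T: "\<forall>k\<in>K. tight x (T k)"
  shows "tight x (\<Union>k\<in>K. T k) \<and> tight x (\<Inter>k\<in>K. T k)"
  using K T
proof (induction K rule: finite_ne_induct)
  case (singleton a)
  then show ?case by simp
next
  case (insert a F)
  then have "tight x (T a)" "tight x (\<Union>k\<in>F. T k)" "tight x (\<Inter>k\<in>F. T k)" by auto
  then show ?case using tight_Un_Int[OF x] by simp
qed

lemma UNIV_tight: "x \<in> P \<Longrightarrow> tight x UNIV"
  using inP unfolding tight_def by simp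

lemma exchange:
  assumes x: "x \<in> P" and ij: "i \<noteq> j" and nt: "\<forall>T. tight x T \<longrightarrow> i \<in> T \<longrightarrow> j \<in> T"
  shows "\<exists>e>0. mv x i j e \<in> P"
proof -
  let ?Ts = "{T. i \<in> T \<and> j \<notin> T \<and> z T \<noteq> \<infinity>}"
  let ?f = "\<lambda>T. real_of_ereal (z T) - ssum T x"
  define e where "e = Min (insert 1 (?f ` ?Ts))"
  have pos: "?f T > 0" if T: "T \<in> ?Ts" for T
  proof -
    obtain r where r: "z T = ereal r" using z_real T by blast
    have "ereal (ssum T x) \<le> z T" using x inP by auto
    moreover have "ereal (ssum T x) \<noteq> z T" using nt T unfolding tight_def by auto
    ultimately have "ssum T x < r" using r by auto
    then show ?thesis using r by simp
  qed
  have fin: "finite (insert 1 (?f ` ?Ts))" by simp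
  have epos: "e > 0" unfolding e_def using pos fin by (subst Min_gr_iff) auto
  have ele: "e \<le> ?f T" if "T \<in> ?Ts" for T
    unfolding e_def using fin that by (intro Min_le) auto
  have "mv x i j e \<in> P"
    unfolding inP
  proof (intro conjI allI)
    show "ereal (ssum UNIV (mv x i j e)) = z UNIV"
      using x inP ssum_mv[of UNIV x i j e] by simp
    fix A
    show "ereal (ssum A (mv x i j e)) \<le> z A"
    proof (cases "i \<in> A \<and> j \<notin> A")
      case True
      show ?thesis
      proof (cases "z A = \<infinity>")
        case False
        then have "A \<in> ?Ts" using True by simp
        then have "e \<le> ?f A" by (rule ele)
        moreover obtain r where r: "z A = ereal r" using z_real False by blast
        ultimately show ?thesis using ssum_mv[of A x i j e] True by simp
      qed simp
    next
      case False
      have "ssum A (mv x i j e) \<le> ssum A x" using ssum_mv[of A x i j e] False epos by auto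
      moreover have "ereal (ssum A x) \<le> z A" using x inP by auto
      ultimately show ?thesis by (meson ereal_less_eq(3) order_trans)
    qed
  qed
  then show ?thesis using epos by blast
qed

lemma uncross:
  assumes x: "x \<in> P" and S: "S \<noteq> {}" and R: "R \<noteq> {}"
    and h: "\<forall>i\<in>S. \<forall>j\<in>R. \<exists>T. tight x T \<and> i \<in> T \<and> j \<notin> T"
  shows "\<exists>W. tight x W \<and> S \<subseteq> W \<and> W \<inter> R = {}"
proof -
  obtain Tf where Tf: "\<And>i j. i \<in> S \<Longrightarrow> j \<in> R \<Longrightarrow> tight x (Tf i j) \<and> i \<in> Tf i j \<and> j \<notin> Tf i j"
    using h by metis
  let ?W = "\<Union>i\<in>S. \<Inter>j\<in>R. Tf i j"
  have "tight x (\<Inter>j\<in>R. Tf i j)" if "i \<in> S" for i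
    using tight_UN[OF x finite R, of "Tf i"] Tf that by blast
  then have "tight x ?W" using tight_UN[OF x finite S, of "\<lambda>i. \<Inter>j\<in>R. Tf i j"] by blast
  moreover have "S \<subseteq> ?W" using Tf by blast
  moreover have "?W \<inter> R = {}" using Tf R by blast
  ultimately show ?thesis by blast
qed

lemma L_UNIV: assumes x: "x \<in> P" shows "L x UNIV"
  unfolding L_def
proof
  fix y assume "y \<in> P"
  then have "ereal (ssum UNIV y) = ereal (ssum UNIV x)" using inP x by simp
  then show "ssum UNIV y \<le> ssum UNIV x" by simp
qed

lemma L_empty: "L x {}"
  unfolding L_def by simp

lemma tight_L: assumes t: "tight x S" shows "L x S"
  unfolding L_def
proof
  fix y assume "y \<in> P"
  then have "ereal (ssum S y) \<le> z S" using inP by blast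
  then have "ereal (ssum S y) \<le> ereal (ssum S x)" using t unfolding tight_def by simp
  then show "ssum S y \<le> ssum S x" by simp
qed

lemma L_iff:
  assumes x: "x \<in> P"
  shows "L x S \<longleftrightarrow> S = {} \<or> S = UNIV \<or> tight x S"
proof
  assume LS: "L x S"
  show "S = {} \<or> S = UNIV \<or> tight x S"
  proof (rule ccontr)
    assume c: "\<not> (S = {} \<or> S = UNIV \<or> tight x S)"
    then have R: "- S \<noteq> {}" by auto
    show False
    proof (cases "\<forall>i\<in>S. \<forall>j\<in>- S. \<exists>T. tight x T \<and> i \<in> T \<and> j \<notin> T")
      case True
      obtain W where "tight x W" "S \<subseteq> W" "W \<inter> - S = {}" using uncross[OF x _ R True] c by blast
      moreover then have "W = S" by blast
      ultimately show False using c by simp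
    next
      case False
      then obtain i j where ij: "i \<in> S" "j \<notin> S" and nt: "\<forall>T. tight x T \<longrightarrow> i \<in> T \<longrightarrow> j \<in> T" by blast
      have "i \<noteq> j" using ij by blast
      then obtain e where e: "e > 0" "mv x i j e \<in> P" using exchange[OF x _ nt] by blast
      have "ssum S (mv x i j e) = ssum S x + e" using ssum_mv[of S x i j e] ij by simp
      then show False using LS e unfolding L_def by fastforce
    qed
  qed
next
  assume "S = {} \<or> S = UNIV \<or> tight x S"
  then show "L x S" using L_empty L_UNIV[OF x] tight_L by blast
qed


lemma L_transfer:
  assumes x: "x \<in> P" and y: "y \<in> P" and eq: "ssum C y = ssum C x" and L: "L x C"
  shows "L y C"
proof -
  have "C = {} \<or> C = UNIV \<or> tight x C" using L L_iff[OF x] by simp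
  then have "C = {} \<or> C = UNIV \<or> tight y C" using eq unfolding tight_def by auto
  then show ?thesis using L_iff[OF y] by simp
qed

lemma improve:
  assumes CU: "\<forall>C\<in>Cs. C \<subseteq> U" and U: "U \<in> Cs \<or> U = {}" and SU: "S \<inter> U = {}" and S: "S \<noteq> {}"
    and y1: "y1 \<in> P" "\<forall>C\<in>Cs. L y1 C" and nL: "\<not> L y1 (U \<union> S)"
  shows "\<exists>y'. y' \<in> P \<and> (\<forall>C\<in>Cs. L y' C) \<and> ssum S y' > ssum S y1"
proof -
  have nU: "U \<union> S \<noteq> UNIV" using nL L_UNIV[OF y1(1)] by auto
  have nt: "\<not> tight y1 (U \<union> S)" using nL tight_L by blast
  have R: "- (U \<union> S) \<noteq> {}" using nU by auto
  show ?thesis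
  proof (cases "\<forall>i\<in>S. \<forall>j\<in>- (U \<union> S). \<exists>T. tight y1 T \<and> i \<in> T \<and> j \<notin> T")
    case True
    obtain W where W: "tight y1 W" "S \<subseteq> W" "W \<inter> - (U \<union> S) = {}"
      using uncross[OF y1(1) S R True] by blast
    have "tight y1 (W \<union> U)"
    proof (cases "U = {}")
      case True then show ?thesis using W by simp
    next
      case False
      then have "U \<in> Cs" using U by simp
      then have "L y1 U" using y1 by simp
      then have "U = {} \<or> U = UNIV \<or> tight y1 U" using L_iff[OF y1(1)] by simp
      moreover have "U \<noteq> UNIV" using SU S by auto
      ultimately have "tight y1 U" using False by simp
      then show ?thesis using tight_Un_Int[OF y1(1) W(1)] by simp
    qed
    moreover have "W \<union> U = U \<union> S" using W by blast
    ultimately show ?thesis using nt by simp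
  next
    case False
    then obtain i j where ij: "i \<in> S" "j \<notin> U \<union> S" and ntT: "\<forall>T. tight y1 T \<longrightarrow> i \<in> T \<longrightarrow> j \<in> T"
      by blast
    have "i \<noteq> j" using ij by blast
    then obtain e where e: "e > 0" "mv y1 i j e \<in> P" using exchange[OF y1(1) _ ntT] by blast
    have "L (mv y1 i j e) C" if C: "C \<in> Cs" for C
    proof (rule L_transfer[OF y1(1) e(2)])
      have "i \<notin> C" "j \<notin> C" using C CU ij SU by auto
      then show "ssum C (mv y1 i j e) = ssum C y1" using ssum_mv[of C y1 i j e] by simp
      show "L y1 C" using y1 C by simp
    qed
    moreover have "ssum S (mv y1 i j e) = ssum S y1 + e" using ssum_mv[of S y1 i j e] ij by simp
    ultimately show ?thesis using e by (intro exI[of _ "mv y1 i j e"]) auto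
  qed
qed

lemma step:
  assumes CU: "\<forall>C\<in>Cs. C \<subseteq> U" and U: "U \<in> Cs \<or> U = {}" and SU: "S \<inter> U = {}" and S: "S \<noteq> {}"
  shows "max_face S {y\<in>P. \<forall>C\<in>Cs. L y C} = {y\<in>P. (\<forall>C\<in>Cs. L y C) \<and> L y (U \<union> S)}"
proof -
  let ?Q = "{y\<in>P. \<forall>C\<in>Cs. L y C}"
  let ?G = "{y\<in>P. (\<forall>C\<in>Cs. L y C) \<and> L y (U \<union> S)}"
  let ?f = "\<lambda>y. ssum S y"
  have Uconst: "ssum U y = ssum U y'" if "y \<in> ?Q" "y' \<in> ?Q" for y y'
  proof (cases "U = {}")
    case False
    then have "U \<in> Cs" using U by simp
    then have "L y U" "L y' U" using that by blast+
    moreover have "y \<in> P" "y' \<in> P" using that by blast+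
    ultimately have "ssum U y' \<le> ssum U y" "ssum U y \<le> ssum U y'" unfolding L_def by blast+
    then show ?thesis by linarith
  qed simp
  have split: "ssum (U \<union> S) y = ssum U y + ssum S y" for y
    using ssum_Un[of U S y] SU by blast
  have Gmax: "ssum S y' \<le> ssum S y" if "y \<in> ?G" "y' \<in> ?Q" for y y'
  proof -
    have "L y (U \<union> S)" "y' \<in> P" using that by blast+
    then have "ssum (U \<union> S) y' \<le> ssum (U \<union> S) y" unfolding L_def by blast
    moreover have "y \<in> ?Q" using that by blast
    then have "ssum U y = ssum U y'" using Uconst that by blast
    ultimately show ?thesis using split[of y] split[of y'] by linarith
  qed
  have argmaxG: "{x\<in>?Q. \<forall>y\<in>?Q. ssum S y \<le> ssum S x} = ?G"
  proof (rule set_eqI, rule iffI)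
    fix x assume x: "x \<in> {x\<in>?Q. \<forall>y\<in>?Q. ssum S y \<le> ssum S x}"
    then have xP: "x \<in> P" "\<forall>C\<in>Cs. L x C" and xm: "\<forall>y\<in>?Q. ssum S y \<le> ssum S x" by blast+
    show "x \<in> ?G"
    proof (rule ccontr)
      assume "x \<notin> ?G"
      then have "\<not> L x (U \<union> S)" using xP by blast
      then obtain y' where y': "y' \<in> P" "\<forall>C\<in>Cs. L y' C" "ssum S y' > ssum S x"
        using improve[OF CU U SU S xP(1) xP(2)] by blast
      then have "y' \<in> ?Q" by blast
      then have "ssum S y' \<le> ssum S x" using xm by blast
      then show False using y'(3) by linarith
    qed
  next
    fix x assume x: "x \<in> ?G"
    have "\<forall>y\<in>?Q. ssum S y \<le> ssum S x" using Gmax[OF x] by blast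
    moreover have "x \<in> ?Q" using x by blast
    ultimately show "x \<in> {x\<in>?Q. \<forall>y\<in>?Q. ssum S y \<le> ssum S x}" by blast
  qed
  show ?thesis
  proof (cases "?Q \<noteq> {} \<and> bdd_above ((\<lambda>x. \<Sum>i\<in>S. x $ i) ` ?Q)")
    case True
    have "max_face S ?Q = {x\<in>?Q. \<forall>y\<in>?Q. (\<Sum>i\<in>S. y $ i) \<le> (\<Sum>i\<in>S. x $ i)}"
      by (simp only: max_face_def if_P[OF True])
    then have "max_face S ?Q = {x\<in>?Q. \<forall>y\<in>?Q. ssum S y \<le> ssum S x}"
      by (simp only: ssum_def)
    then show ?thesis using argmaxG by simp
  next
    case False
    have mf: "max_face S ?Q = {}" by (simp only: max_face_def if_not_P[OF False])
    have "?G = {}"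
    proof (rule ccontr)
      assume "?G \<noteq> {}"
      then obtain y0 where y0: "y0 \<in> ?G" by blast
      then have "?Q \<noteq> {}" by auto
      moreover have "bdd_above ((\<lambda>x. \<Sum>i\<in>S. x $ i) ` ?Q)"
        unfolding bdd_above_def
      proof (intro exI ballI)
        fix t assume "t \<in> (\<lambda>x. \<Sum>i\<in>S. x $ i) ` ?Q"
        then obtain y' where "y' \<in> ?Q" "t = ssum S y'" unfolding ssum_def by blast
        then show "t \<le> ssum S y0" using Gmax y0 by blast
      qed
      ultimately show False using False by blast
    qed
    then show ?thesis using mf by simp
  qed
qed

lemma lex:
  "\<forall>(Cs::'n set set) U. (\<forall>C\<in>Cs. C \<subseteq> U) \<longrightarrow> (U \<in> Cs \<or> U = {}) \<longrightarrow>
     (\<forall>k<length Ss. Ss ! k \<noteq> {} \<and> Ss ! k \<inter> (U \<union> \<Union>(set (take k Ss))) = {}) \<longrightarrow>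
     lex_face Ss {y\<in>P. \<forall>C\<in>Cs. L y C} =
       {y\<in>P. (\<forall>C\<in>Cs. L y C) \<and> (\<forall>k\<le>length Ss. L y (U \<union> \<Union>(set (take k Ss))))}"
proof (induction Ss)
  case Nil
  show ?case
  proof (intro allI impI)
    fix Cs :: "'n set set" and U :: "'n set" assume U: "U \<in> Cs \<or> U = {}"
    have "L y U" if "y \<in> P" "\<forall>C\<in>Cs. L y C" for y using that U L_empty by auto
    then show "lex_face [] {y\<in>P. \<forall>C\<in>Cs. L y C} =
       {y\<in>P. (\<forall>C\<in>Cs. L y C) \<and> (\<forall>k\<le>length []. L y (U \<union> \<Union>(set (take k []))))}"
      by auto
  qed
next
  case (Cons S Ss)
  show ?case
  proof (intro allI impI)
    fix Cs :: "'n set set" and U :: "'n set" assume CU: "\<forall>C\<in>Cs. C \<subseteq> U" and U: "U \<in> Cs \<or> U = {}"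
      and D: "\<forall>k<length (S # Ss). (S # Ss) ! k \<noteq> {} \<and> (S # Ss) ! k \<inter> (U \<union> \<Union>(set (take k (S # Ss)))) = {}"
    have S: "S \<noteq> {}" "S \<inter> U = {}" using D[rule_format, of 0] by auto
    have D': "\<forall>k<length Ss. Ss ! k \<noteq> {} \<and> Ss ! k \<inter> (U \<union> S \<union> \<Union>(set (take k Ss))) = {}"
    proof (intro allI impI)
      fix k assume "k < length Ss"
      then show "Ss ! k \<noteq> {} \<and> Ss ! k \<inter> (U \<union> S \<union> \<Union>(set (take k Ss))) = {}"
        using D[rule_format, of "Suc k"] by (simp add: Un_assoc)
    qed
    have mf: "max_face S {y\<in>P. \<forall>C\<in>Cs. L y C} = {y\<in>P. \<forall>C\<in>insert (U \<union> S) Cs. L y C}"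
      using step[OF CU U S(2) S(1)] by auto
    have CU': "\<forall>C\<in>insert (U \<union> S) Cs. C \<subseteq> U \<union> S" using CU by auto
    have IH: "lex_face Ss {y\<in>P. \<forall>C\<in>insert (U \<union> S) Cs. L y C} =
       {y\<in>P. (\<forall>C\<in>insert (U \<union> S) Cs. L y C) \<and> (\<forall>k\<le>length Ss. L y (U \<union> S \<union> \<Union>(set (take k Ss))))}"
      using Cons.IH CU' D' by blast
    have eq: "(\<forall>C\<in>Cs. L y C) \<and> (\<forall>k\<le>length (S # Ss). L y (U \<union> \<Union>(set (take k (S # Ss)))))
       \<longleftrightarrow> (\<forall>C\<in>insert (U \<union> S) Cs. L y C) \<and> (\<forall>k\<le>length Ss. L y (U \<union> S \<union> \<Union>(set (take k Ss))))"
      if y: "y \<in> P" for y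
    proof
      assume a: "(\<forall>C\<in>Cs. L y C) \<and> (\<forall>k\<le>length (S # Ss). L y (U \<union> \<Union>(set (take k (S # Ss)))))"
      have "L y (U \<union> S \<union> \<Union>(set (take k Ss)))" if "k \<le> length Ss" for k
        using a that by (auto dest!: spec[of _ "Suc k"] simp: Un_assoc)
      moreover have "L y (U \<union> S)" using a by (auto dest!: spec[of _ "Suc 0"])
      ultimately show "(\<forall>C\<in>insert (U \<union> S) Cs. L y C) \<and> (\<forall>k\<le>length Ss. L y (U \<union> S \<union> \<Union>(set (take k Ss))))"
        using a by auto
    next
      assume a: "(\<forall>C\<in>insert (U \<union> S) Cs. L y C) \<and> (\<forall>k\<le>length Ss. L y (U \<union> S \<union> \<Union>(set (take k Ss))))"
      have "L y (U \<union> \<Union>(set (take k (S # Ss))))" if k: "k \<le> length (S # Ss)" for k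
      proof (cases k)
        case 0
        then show ?thesis using U a L_empty by auto
      next
        case (Suc k')
        then show ?thesis using a k by (simp add: Un_assoc)
      qed
      then show "(\<forall>C\<in>Cs. L y C) \<and> (\<forall>k\<le>length (S # Ss). L y (U \<union> \<Union>(set (take k (S # Ss)))))"
        using a by auto
    qed
    show "lex_face (S # Ss) {y\<in>P. \<forall>C\<in>Cs. L y C} =
       {y\<in>P. (\<forall>C\<in>Cs. L y C) \<and> (\<forall>k\<le>length (S # Ss). L y (U \<union> \<Union>(set (take k (S # Ss)))))}"
    proof -
      have "lex_face (S # Ss) {y\<in>P. \<forall>C\<in>Cs. L y C} = lex_face Ss {y\<in>P. \<forall>C\<in>insert (U \<union> S) Cs. L y C}"
        using mf by simp
      also have "\<dots> = {y\<in>P. (\<forall>C\<in>insert (U \<union> S) Cs. L y C) \<and> (\<forall>k\<le>length Ss. L y (U \<union> S \<union> \<Union>(set (take k Ss))))}"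
        by (rule IH)
      also have "\<dots> = {y\<in>P. (\<forall>C\<in>Cs. L y C) \<and> (\<forall>k\<le>length (S # Ss). L y (U \<union> \<Union>(set (take k (S # Ss)))))}"
      proof (rule set_eqI)
        fix y show "y \<in> {y\<in>P. (\<forall>C\<in>insert (U \<union> S) Cs. L y C) \<and> (\<forall>k\<le>length Ss. L y (U \<union> S \<union> \<Union>(set (take k Ss))))} \<longleftrightarrow>
            y \<in> {y\<in>P. (\<forall>C\<in>Cs. L y C) \<and> (\<forall>k\<le>length (S # Ss). L y (U \<union> \<Union>(set (take k (S # Ss)))))}"
        proof (cases "y \<in> P")
          case True
          show ?thesis using eq[OF True] True by (simp only: mem_Collect_eq simp_thms)
        qed simp
      qed
      finally show ?thesis .
    qed
  qed
qed


lemma ssum_compl: "ssum (- S) x = ssum UNIV x - ssum S x"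
proof -
  have "ssum (S \<union> - S) x = ssum S x + ssum (- S) x" by (rule ssum_Un) blast
  moreover have "S \<union> - S = UNIV" by blast
  ultimately show ?thesis by simp
qed

lemma ssum_lin: "ssum S (a + b) = ssum S a + ssum S b" "ssum S (c *\<^sub>R a) = c * ssum S a"
  "ssum S (a - b) = ssum S a - ssum S b"
  unfolding ssum_def by (simp_all add: sum.distrib sum_distrib_left sum_subtractf)

lemma relint_compl:
  assumes y: "y \<in> rel_interior P" and LS: "L y S"
  shows "L y (- S)"
proof -
  obtain e where e: "e > 0" "ball y e \<inter> affine hull P \<subseteq> P" and yP: "y \<in> P"
    using y unfolding mem_rel_interior_ball by blast
  have ge: "ssum S y \<le> ssum S x" if x: "x \<in> P" for x
  proof (cases "x = y")
    case False
    define t where "t = e / (2 * norm (y - x))"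
    have nz: "norm (y - x) > 0" using False by simp
    have t: "t > 0" unfolding t_def using e nz by simp
    define w where "w = (1 + t) *\<^sub>R y + (- t) *\<^sub>R x"
    have "w \<in> affine hull P"
    proof -
      have "y \<in> affine hull P" "x \<in> affine hull P" using yP x by (simp_all add: hull_inc)
      then show ?thesis unfolding w_def by (intro mem_affine) simp_all
    qed
    moreover have "w \<in> ball y e"
    proof -
      have "y - w = t *\<^sub>R (x - y)" unfolding w_def by (simp add: algebra_simps)
      then have "dist y w = t * norm (y - x)" using t by (simp add: dist_norm norm_minus_commute)
      also have "\<dots> = e / 2" unfolding t_def using nz by simp
      finally show ?thesis using e by simp
    qed
    ultimately have "w \<in> P" using e by blast
    then have "ssum S w \<le> ssum S y" using LS unfolding L_def by blast
    moreover have "ssum S w = (1 + t) * ssum S y - t * ssum S x"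
      unfolding w_def by (simp add: ssum_lin)
    ultimately have "t * ssum S y \<le> t * ssum S x" by (simp add: algebra_simps)
    then show ?thesis using t by simp
  qed simp
  show ?thesis unfolding L_def
  proof
    fix x assume x: "x \<in> P"
    have "ssum UNIV x = ssum UNIV y" using x yP by (rule UNIV_eq)
    then show "ssum (- S) x \<le> ssum (- S) y" using ge[OF x] unfolding ssum_compl by simp
  qed
qed


lemma inner_ind: "ind S \<bullet> x = ssum S x"
  unfolding ind_def inner_vec_def ssum_def
  by (simp add: if_distrib[of "\<lambda>a. a * _"] sum.If_cases)

lemma bool_relint:
  assumes yP: "y \<in> P" and B: "\<forall>S. L y S \<longrightarrow> L y (- S)"
  shows "y \<in> rel_interior P \<and> aff_dim P = int CARD('n) - int (dim (ind ` {S. L y S}))"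
proof -
  define Aff where "Aff = {x. \<forall>S. L y S \<longrightarrow> ssum S x = ssum S y}"
  define V where "V = {x. \<forall>S. L y S \<longrightarrow> ssum S x = 0}"
  have PA: "P \<subseteq> Aff"
  proof
    fix x assume x: "x \<in> P"
    have "ssum S x = ssum S y" if "L y S" for S
    proof -
      have "ssum S x \<le> ssum S y" using that x unfolding L_def by blast
      moreover have "ssum (- S) x \<le> ssum (- S) y" using B that x unfolding L_def by blast
      moreover have "ssum UNIV x = ssum UNIV y" using x yP by (rule UNIV_eq)
      ultimately show ?thesis unfolding ssum_compl by linarith
    qed
    then show "x \<in> Aff" unfolding Aff_def by blast
  qed
  have affA: "affine Aff"
    unfolding affine_def
  proof (intro ballI allI impI)
    fix a b :: "real^'n" and u v :: real
    assume a: "a \<in> Aff" and b: "b \<in> Aff" and uv: "u + v = 1"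
    show "u *\<^sub>R a + v *\<^sub>R b \<in> Aff"
      unfolding Aff_def
    proof (intro CollectI allI impI)
      fix S assume S: "L y S"
      have "ssum S a = ssum S y" "ssum S b = ssum S y" using a b S unfolding Aff_def by blast+
      then have "ssum S (u *\<^sub>R a + v *\<^sub>R b) = (u + v) * ssum S y" by (simp add: ssum_lin algebra_simps)
      then show "ssum S (u *\<^sub>R a + v *\<^sub>R b) = ssum S y" using uv by simp
    qed
  qed
  let ?Ts = "{T. \<not> L y T \<and> z T \<noteq> \<infinity>}"
  let ?f = "\<lambda>T. (real_of_ereal (z T) - ssum T y) / (real CARD('n) + 1)"
  define e where "e = Min (insert 1 (?f ` ?Ts))"
  have fpos: "?f T > 0" if T: "T \<in> ?Ts" for T
  proof -
    obtain r where r: "z T = ereal r" using z_real T by blast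
    have "ereal (ssum T y) \<le> z T" using yP inP by auto
    moreover have "\<not> tight y T" using T tight_L by blast
    then have "ereal (ssum T y) \<noteq> z T" unfolding tight_def by simp
    ultimately have "ssum T y < r" using r by auto
    then show ?thesis using r by simp
  qed
  have fin: "finite (insert 1 (?f ` ?Ts))" by simp
  have epos: "e > 0" unfolding e_def using fpos fin by (subst Min_gr_iff) auto
  have ele: "e \<le> ?f T" if "T \<in> ?Ts" for T
    unfolding e_def using fin that by (intro Min_le) auto
  have ballP: "ball y e \<inter> Aff \<subseteq> P"
  proof
    fix x assume x: "x \<in> ball y e \<inter> Aff"
    have dxy: "dist y x < e" using x by simp
    have bound: "\<bar>ssum T x - ssum T y\<bar> \<le> real CARD('n) * dist y x" for T
    proof -
      have "ssum T x - ssum T y = (\<Sum>i\<in>T. (x - y) $ i)" unfolding ssum_def by (simp add: sum_subtractf)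
      then have "\<bar>ssum T x - ssum T y\<bar> \<le> (\<Sum>i\<in>T. \<bar>(x - y) $ i\<bar>)" by (simp only: sum_abs)
      also have "\<dots> \<le> real (card T) * norm (x - y)"
        using sum_bounded_above[of T "\<lambda>i. \<bar>(x - y) $ i\<bar>" "norm (x - y)"] component_le_norm_cart by blast
      also have "\<dots> \<le> real CARD('n) * norm (x - y)"
        by (intro mult_right_mono) (simp_all add: card_mono)
      finally show ?thesis by (simp add: dist_norm norm_minus_commute)
    qed
    show "x \<in> P" unfolding inP
    proof (intro conjI allI)
      have "L y UNIV" using L_UNIV[OF yP] .
      then have "ssum UNIV x = ssum UNIV y" using x unfolding Aff_def by blast
      then show "ereal (ssum UNIV x) = z UNIV" using yP inP by simp
      fix T
      show "ereal (ssum T x) \<le> z T"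
      proof (cases "L y T")
        case True
        then have "ssum T x = ssum T y" using x unfolding Aff_def by blast
        then show ?thesis using yP inP by simp
      next
        case False
        show ?thesis
        proof (cases "z T = \<infinity>")
          case False': False
          then have T: "T \<in> ?Ts" using False by simp
          obtain r where r: "z T = ereal r" using z_real False' by blast
          have "e \<le> ?f T" using ele[OF T] .
          then have "(real CARD('n) + 1) * e \<le> r - ssum T y" using r by (simp add: field_simps)
          moreover have "real CARD('n) * dist y x \<le> (real CARD('n) + 1) * e"
            using dxy epos by (intro mult_mono) auto
          ultimately have "ssum T x \<le> r" using bound[of T] by linarith
          then show ?thesis using r by simp
        qed simp
      qed
    qed
  qed
  have hullA: "affine hull P \<subseteq> Aff" using PA affA by (simp add: hull_minimal)
  have relint: "y \<in> rel_interior P"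
    unfolding mem_rel_interior_ball using yP epos ballP hullA by blast
  have yA: "y \<in> Aff" unfolding Aff_def by simp
  have dimeq: "aff_dim P = aff_dim Aff"
  proof (rule order_antisym)
    show "aff_dim P \<le> aff_dim Aff" using PA by (rule aff_dim_subset)
    have ne: "Aff \<inter> ball y e \<noteq> {}" using yA epos by (metis IntI centre_in_ball empty_iff)
    have "aff_dim (Aff \<inter> ball y e) = aff_dim Aff"
      by (rule aff_dim_convex_Int_open[OF affine_imp_convex[OF affA] open_ball ne])
    moreover have "aff_dim (Aff \<inter> ball y e) \<le> aff_dim P" using ballP by (intro aff_dim_subset) blast
    ultimately show "aff_dim Aff \<le> aff_dim P" by simp
  qed
  have AV: "Aff = (+) y ` V"
  proof (rule set_eqI)
    fix x
    have "x \<in> Aff \<longleftrightarrow> x - y \<in> V" unfolding Aff_def V_def by (simp add: ssum_lin)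
    moreover have "x \<in> (+) y ` V \<longleftrightarrow> x - y \<in> V" by (auto intro: image_eqI[of _ _ "x - y"])
    ultimately show "x \<in> Aff \<longleftrightarrow> x \<in> (+) y ` V" by simp
  qed
  let ?G = "ind ` {S. L y S}"
  have Vorth: "V = {x \<in> UNIV. \<forall>a\<in>span ?G. orthogonal a x}"
  proof (rule set_eqI)
    fix x
    have "x \<in> V \<longleftrightarrow> (\<forall>g\<in>?G. orthogonal g x)"
      unfolding V_def orthogonal_def by (auto simp: inner_ind)
    also have "\<dots> \<longleftrightarrow> (\<forall>a\<in>span ?G. orthogonal a x)"
    proof
      assume h: "\<forall>g\<in>?G. orthogonal g x"
      show "\<forall>a\<in>span ?G. orthogonal a x"
      proof
        fix a assume a: "a \<in> span ?G"
        have "orthogonal x a"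
        proof (rule orthogonal_to_span[OF a])
          fix g assume "g \<in> ?G"
          then have "orthogonal g x" using h by blast
          then show "orthogonal x g" by (simp add: orthogonal_commute)
        qed
        then show "orthogonal a x" by (simp add: orthogonal_commute)
      qed
    next
      assume h: "\<forall>a\<in>span ?G. orthogonal a x"
      show "\<forall>g\<in>?G. orthogonal g x"
      proof
        fix g assume "g \<in> ?G"
        then have "g \<in> span ?G" by (rule span_base)
        then show "orthogonal g x" using h by blast
      qed
    qed
    finally have "x \<in> V \<longleftrightarrow> (\<forall>a\<in>span ?G. orthogonal a x)" .
    then show "x \<in> V \<longleftrightarrow> x \<in> {x \<in> UNIV. \<forall>a\<in>span ?G. orthogonal a x}"
      by (simp only: mem_Collect_eq UNIV_I simp_thms)
  qed
  have subV: "subspace V" unfolding Vorth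
    using subspace_orthogonal_to_vectors[of "span ?G"] by simp
  have "dim {x \<in> UNIV. \<forall>a\<in>span ?G. orthogonal a x} + dim (span ?G) = dim (UNIV :: (real^'n) set)"
    by (rule dim_subspace_orthogonal_to_vectors) (simp_all add: subspace_span)
  then have "dim V + dim ?G = CARD('n)" unfolding Vorth[symmetric] by (simp add: dim_span)
  moreover have "aff_dim P = int (dim V)"
  proof -
    have "aff_dim P = aff_dim ((+) y ` V)" using dimeq AV by simp
    also have "\<dots> = aff_dim V" by (rule aff_dim_translation_eq)
    also have "\<dots> = int (dim V)" by (rule aff_dim_subspace[OF subV])
    finally show ?thesis .
  qed
  ultimately have "aff_dim P = int CARD('n) - int (dim ?G)" by linarith
  then show ?thesis using relint by blast
qed

end

lemma osp_take_drop:
  assumes Ss: "Ss \<in> ordered_set_partitions W"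
  shows "\<Union>(set (take k Ss)) \<union> \<Union>(set (drop k Ss)) = W"
    and "\<Union>(set (take k Ss)) \<inter> \<Union>(set (drop k Ss)) = {}"
proof -
  have dj: "\<forall>i<length Ss. \<forall>j<length Ss. i \<noteq> j \<longrightarrow> Ss ! i \<inter> Ss ! j = {}"
    and un: "\<Union>(set Ss) = W" using Ss unfolding ordered_set_partitions_def by auto
  have "set (take k Ss) \<union> set (drop k Ss) = set Ss"
    by (metis append_take_drop_id set_append)
  then show "\<Union>(set (take k Ss)) \<union> \<Union>(set (drop k Ss)) = W" using un by blast
  show "\<Union>(set (take k Ss)) \<inter> \<Union>(set (drop k Ss)) = {}"
  proof (rule equals0I)
    fix x assume "x \<in> \<Union>(set (take k Ss)) \<inter> \<Union>(set (drop k Ss))"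
    then obtain T T' where T: "T \<in> set (take k Ss)" "x \<in> T" and T': "T' \<in> set (drop k Ss)" "x \<in> T'" by blast
    obtain a where a: "a < length (take k Ss)" "take k Ss ! a = T" using T(1) by (meson in_set_conv_nth)
    obtain b where b: "b < length (drop k Ss)" "drop k Ss ! b = T'" using T'(1) by (meson in_set_conv_nth)
    have "Ss ! a = T" "a < k" "a < length Ss" using a by auto
    moreover have "Ss ! (k + b) = T'" "k + b < length Ss" using b by auto
    ultimately have "T \<inter> T' = {}" using dj by (metis add.commute less_add_same_cancel1 not_add_less1)
    then show False using T T' by blast
  qed
qed

lemma lex_face_sub: "lex_face Ss F \<subseteq> F"
proof (induction Ss arbitrary: F)
  case (Cons S Ss)
  have "max_face S F \<subseteq> F" unfolding max_face_def by auto
  then show ?case using Cons.IH[of "max_face S F"] by simp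
qed simp

context gp
begin

lemma L_Un_Int:
  assumes y: "y \<in> P" and A: "L y A" and B: "L y B"
  shows "L y (A \<union> B) \<and> L y (A \<inter> B)"
proof -
  have a: "A = {} \<or> A = UNIV \<or> tight y A" using A L_iff[OF y] by simp
  have b: "B = {} \<or> B = UNIV \<or> tight y B" using B L_iff[OF y] by simp
  show ?thesis
  proof (cases "A = {} \<or> A = UNIV \<or> B = {} \<or> B = UNIV")
    case True
    then show ?thesis using A B L_empty L_UNIV[OF y] by auto
  next
    case False
    then have "tight y A" "tight y B" using a b by auto
    then have "tight y (A \<union> B)" "tight y (A \<inter> B)" using tight_Un_Int[OF y] by auto
    then show ?thesis using tight_L by blast
  qed
qed

lemma indicator_lex:
  assumes y: "y \<in> P" and Ss: "Ss \<in> ordered_set_partitions (UNIV::'n set)"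
  shows "indicator (lex_face Ss P) y = (if \<forall>j<length Ss. \<Union>(set (drop j Ss)) \<in> {V. L y (- V)} then 1 else (0::int))"
proof -
  have dj: "\<forall>i<length Ss. \<forall>j<length Ss. i \<noteq> j \<longrightarrow> Ss ! i \<inter> Ss ! j = {}"
    and ne: "\<forall>S\<in>set Ss. S \<noteq> {}" using Ss unfolding ordered_set_partitions_def by auto
  have hyp: "\<forall>k<length Ss. Ss ! k \<noteq> {} \<and> Ss ! k \<inter> ({} \<union> \<Union>(set (take k Ss))) = {}"
  proof (intro allI impI conjI)
    fix k assume k: "k < length Ss"
    show "Ss ! k \<noteq> {}" using ne k by simp
    show "Ss ! k \<inter> ({} \<union> \<Union>(set (take k Ss))) = {}"
    proof (rule equals0I)
      fix x assume "x \<in> Ss ! k \<inter> ({} \<union> \<Union>(set (take k Ss)))"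
      then obtain T where T: "T \<in> set (take k Ss)" "x \<in> T" "x \<in> Ss ! k" by blast
      obtain a where a: "a < length (take k Ss)" "take k Ss ! a = T" using T(1) by (meson in_set_conv_nth)
      have "Ss ! a = T" "a < k" using a by auto
      then have "T \<inter> Ss ! k = {}" using dj k by (metis less_imp_neq order.strict_trans)
      then show False using T by blast
    qed
  qed
  have P_eq: "{y\<in>P. \<forall>C\<in>({}::'n set set). L y C} = P" by simp
  have lexeq: "lex_face Ss P = {y\<in>P. (\<forall>C\<in>({}::'n set set). L y C) \<and> (\<forall>k\<le>length Ss. L y ({} \<union> \<Union>(set (take k Ss))))}"
  proof -
    have "lex_face Ss {y\<in>P. \<forall>C\<in>({}::'n set set). L y C} = {y\<in>P. (\<forall>C\<in>({}::'n set set). L y C) \<and> (\<forall>k\<le>length Ss. L y ({} \<union> \<Union>(set (take k Ss))))}"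
    proof -
      have l0: "\<forall>U. (\<forall>C\<in>({}::'n set set). C \<subseteq> U) \<longrightarrow> (U \<in> ({}::'n set set) \<or> U = {}) \<longrightarrow>
     (\<forall>k<length Ss. Ss ! k \<noteq> {} \<and> Ss ! k \<inter> (U \<union> \<Union>(set (take k Ss))) = {}) \<longrightarrow>
     lex_face Ss {y\<in>P. \<forall>C\<in>({}::'n set set). L y C} =
       {y\<in>P. (\<forall>C\<in>({}::'n set set). L y C) \<and> (\<forall>k\<le>length Ss. L y (U \<union> \<Union>(set (take k Ss))))}"
        by (rule spec[OF lex[of Ss], where x="{}::'n set set"])
      note l1 = spec[OF l0, where x="{}::'n set"]
      have a: "\<forall>C\<in>({}::'n set set). C \<subseteq> {}" by simp
      have b: "({}::'n set) \<in> ({}::'n set set) \<or> ({}::'n set) = {}" by simp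
      show ?thesis by (rule mp[OF mp[OF mp[OF l1 a] b] hyp])
    qed
    then show ?thesis unfolding P_eq .
  qed
  have "y \<in> lex_face Ss P \<longleftrightarrow> (\<forall>k\<le>length Ss. L y (\<Union>(set (take k Ss))))"
    using lexeq y by simp
  also have "\<dots> \<longleftrightarrow> (\<forall>j<length Ss. \<Union>(set (drop j Ss)) \<in> {V. L y (- V)})"
  proof -
    have c: "\<Union>(set (take k Ss)) = - \<Union>(set (drop k Ss))" for k
    proof -
      have h: "A \<union> B = UNIV \<Longrightarrow> A \<inter> B = {} \<Longrightarrow> A = - B" for A B :: "'n set" by blast
      show ?thesis by (rule h[OF osp_take_drop(1)[OF Ss] osp_take_drop(2)[OF Ss]])
    qed
    have "(\<forall>k\<le>length Ss. L y (\<Union>(set (take k Ss)))) \<longleftrightarrow> (\<forall>k<length Ss. L y (\<Union>(set (take k Ss))))"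
    proof
      assume h1: "\<forall>k<length Ss. L y (\<Union>(set (take k Ss)))"
      have h2: "L y (\<Union>(set (take (length Ss) Ss)))"
        using c[of "length Ss"] L_UNIV[OF y] by simp
      show "\<forall>k\<le>length Ss. L y (\<Union>(set (take k Ss)))"
      proof (intro allI impI)
        fix k assume "k \<le> length Ss"
        then have "k < length Ss \<or> k = length Ss" by linarith
        then show "L y (\<Union>(set (take k Ss)))" using h1 h2 by blast
      qed
    qed simp
    then show ?thesis using c by simp
  qed
  finally show ?thesis by (simp add: indicator_def)
qed

lemma main_pt:
  "GP_antipode P y = (-1) ^ nat (int CARD('n) - aff_dim P) * indicator (rel_interior P) y"
proof (cases "y \<in> P")
  case False
  have "indicator (lex_face Ss P) y = (0::int)" for Ss
  proof -
    have "y \<notin> lex_face Ss P" using lex_face_sub[of Ss P] False by blast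
    then show ?thesis by simp
  qed
  then have "GP_antipode P y = 0" unfolding GP_antipode_def by simp
  moreover have "y \<notin> rel_interior P" using False rel_interior_subset by blast
  ultimately show ?thesis by simp
next
  case True
  define M where "M = {V::'n set. L y (- V)}"
  interpret R: ringfam M
  proof
    show "{} \<in> M" unfolding M_def using L_UNIV[OF True] by simp
    fix A B assume "A \<in> M" "B \<in> M"
    then have a: "L y (- A)" "L y (- B)" unfolding M_def by auto
    have "- (A \<union> B) = - A \<inter> - B" "- (A \<inter> B) = - A \<union> - B" by auto
    then show "A \<union> B \<in> M" "A \<inter> B \<in> M" unfolding M_def using L_Un_Int[OF True a] by auto
  qed
  have UM: "UNIV \<in> M" unfolding M_def using L_empty by simp
  have "GP_antipode P y = osum M UNIV"
    unfolding GP_antipode_def osum_def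
    by (rule sum.cong[OF refl]) (simp add: indicator_lex[OF True] M_def)
  also have "\<dots> = (if R.Bool UNIV then (-1) ^ R.d UNIV else 0)"
  proof (rule R.closed_form[OF _ _ _ UM])
    fix V assume "V \<notin> M"
    moreover then have "V \<noteq> {}" using R.empty_in by auto
    ultimately show "osum M V = 0" by (simp add: osum_notin)
  next
    show "osum M {} = 1" by (rule osum_empty)
  next
    fix W assume "W \<in> M" "W \<noteq> {}"
    then show "(\<Sum>V\<in>Pow W. osum M V) = 0" by (simp add: osum_sumPow)
  qed
  also have "\<dots> = (-1) ^ nat (int CARD('n) - aff_dim P) * indicator (rel_interior P) y"
  proof (cases "\<forall>S. L y S \<longrightarrow> L y (- S)")
    case True': True
    have Miff: "V \<in> M \<longleftrightarrow> L y V" for V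
    proof
      assume "V \<in> M"
      then have "L y (- V)" unfolding M_def by simp
      then have "L y (- (- V))" using True' by blast
      then show "L y V" by simp
    next
      assume "L y V"
      then have "L y (- V)" using True' by blast
      then show "V \<in> M" unfolding M_def by simp
    qed
    have B: "R.Bool UNIV" unfolding R.Bool_def
    proof (intro ballI impI)
      fix V assume "V \<in> M"
      then have "L y V" using Miff by blast
      then have "L y (- V)" using True' by blast
      then have "- V \<in> M" using Miff by blast
      moreover have "UNIV - V = - V" by blast
      ultimately show "UNIV - V \<in> M" by simp
    qed
    have MS: "{V\<in>M. V \<subseteq> UNIV} = {S. L y S}"
    proof (rule set_eqI)
      fix V show "V \<in> {V\<in>M. V \<subseteq> UNIV} \<longleftrightarrow> V \<in> {S. L y S}" using Miff[of V] by simp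
    qed
    obtain ri: "y \<in> rel_interior P" and ad: "aff_dim P = int CARD('n) - int (dim (ind ` {S. L y S}))"
      using bool_relint[OF True True'] by blast
    have "R.d UNIV = dim (ind ` {S. L y S})" unfolding R.d_def MS ..
    then have "nat (int CARD('n) - aff_dim P) = R.d UNIV" using ad by simp
    then show ?thesis using B ri by simp
  next
    case False
    then obtain S where S: "L y S" "\<not> L y (- S)" by blast
    have "\<not> R.Bool UNIV"
    proof
      assume "R.Bool UNIV"
      moreover have "- S \<in> M" unfolding M_def using S by simp
      ultimately have "UNIV - (- S) \<in> M" unfolding R.Bool_def by blast
      moreover have "UNIV - (- S) = S" by blast
      ultimately have "S \<in> M" by simp
      then have "L y (- S)" unfolding M_def by simp
      then show False using S by blast
    qed
    moreover have "y \<notin> rel_interior P" using relint_compl S by blast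
    ultimately show ?thesis by simp
  qed
  finally show ?thesis .
qed

end

theorem mainTheorem2:
  fixes P :: "(real^'n::finite) set"
  assumes "is_ext_GP P"
  shows "GP_antipode P =
    (\<lambda>x. (-1) ^ nat (int CARD('n) - aff_dim P) * indicator (rel_interior P) x)"
proof -
  obtain z where z: "ext_submodular z" "P = GP_of z" using assms unfolding is_ext_GP_def by blast
  interpret gp z P using z by unfold_locales
  show ?thesis by (rule ext) (rule main_pt)
qed

end
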